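(* Let $A\in\mathbb{C}^{m\times n}$ have rank $r$ with $\mathrm{rank}(AA^{\sim})=r>0$, and let $A=BC$ be a full rank factorization of $A$, where $B\in\mathbb{C}^{m\times r}$ and $C\in\mathbb{C}^{r\times n}$ both have rank $r$. Then $$A\{1,2,4^{\mathfrak{m}}\}=\left\{C^{\sim}(CC^{\sim})^{-1}B_L^{-1} : B_L^{-1}\in\mathbb{C}^{r\times m} \text{ is a left inverse of } B\right\}.$$
   Context: For a positive integer $k$, the Minkowski metric matrix of order $k$ is $G_k=\mathrm{diag}(1,-I_{k-1})$ (with $G_1=(1)$). For $A\in\mathbb{C}^{m\times n}$, the Minkowski adjoint is $A^{\sim}=G_nA^*G_m$, where $A^*$ is the conjugate transpose. For $A\in\mathbb{C}^{m\times n}$ and $X\in\mathbb{C}^{n\times m}$ consider the equations $(1)\ AXA=A$, $(2)\ XAX=X$, $(3^{\mathfrak{m}})\ (AX)^{\sim}=AX$, $(4^{\mathfrak{m}})\ (XA)^{\sim}=XA$; $A\{i,\dots,k\}$ denotes the set of all $X$ satisfying the listed equations. A left inverse of $B$ is a matrix $B_L^{-1}$ with $B_L^{-1}B=I_r$. *)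

theory Defs
  imports "Jordan_Normal_Form.Schur_Decomposition" "Jordan_Normal_Form.DL_Rank"
    "Jordan_Normal_Form.Gauss_Jordan_Elimination"
begin

definition minkowski_G :: "nat \<Rightarrow> complex mat" where
  "minkowski_G k = mat k k (\<lambda>(i, j). if i = j then (if i = 0 then 1 else - 1) else 0)"

definition mink_adj :: "complex mat \<Rightarrow> complex mat" where
  "mink_adj A = minkowski_G (dim_col A) * mat_adjoint A * minkowski_G (dim_row A)"

definition mrank :: "complex mat \<Rightarrow> nat" where
  "mrank A = vec_space.rank (dim_row A) A"

definition mink_inv_124 :: "complex mat \<Rightarrow> complex mat set" where
  "mink_inv_124 A = {X \<in> carrier_mat (dim_col A) (dim_row A).
      A * X * A = A \<and> X * A * X = X \<and> mink_adj (X * A) = X * A}"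

end

theory Submission
  imports Defs
begin

lemma adj_dims[simp]: "dim_row (mat_adjoint A) = dim_col A" "dim_col (mat_adjoint A) = dim_row A"
  unfolding mat_adjoint_def by auto

lemma adj_index[simp]: "i < dim_col A \<Longrightarrow> j < dim_row A \<Longrightarrow> mat_adjoint A $$ (i,j) = conjugate (A $$ (j,i))"
  unfolding mat_adjoint_def by (auto simp: mat_of_rows_def)

definition sg :: "nat \<Rightarrow> complex" where "sg i = (if i = 0 then 1 else -1)"

lemma sg_sq[simp]: "sg i * sg i = 1" by (simp add: sg_def)
lemma sg_cnj[simp]: "cnj (sg i) = sg i" by (simp add: sg_def)

lemma G_dims[simp]: "dim_row (minkowski_G k) = k" "dim_col (minkowski_G k) = k"
  by (auto simp: minkowski_G_def)

lemma G_index: "i < k \<Longrightarrow> j < k \<Longrightarrow> minkowski_G k $$ (i,j) = (if i = j then sg i else 0)"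
  by (auto simp: minkowski_G_def sg_def)

lemma G_mult_left: assumes "dim_row X = k" "i < k" "j < dim_col X"
  shows "(minkowski_G k * X) $$ (i,j) = sg i * X $$ (i,j)"
proof -
  have "(minkowski_G k * X) $$ (i,j) = (\<Sum>l<k. minkowski_G k $$ (i,l) * X $$ (l,j))"
    using assms by (simp add: scalar_prod_def lessThan_atLeast0)
  also have "\<dots> = (\<Sum>l<k. if l = i then sg i * X $$ (l,j) else 0)"
    using assms by (intro sum.cong) (auto simp: G_index)
  also have "\<dots> = sg i * X $$ (i,j)" using assms by (simp add: sum.delta)
  finally show ?thesis .
qed

lemma G_mult_right: assumes "dim_col X = k" "i < dim_row X" "j < k"
  shows "(X * minkowski_G k) $$ (i,j) = X $$ (i,j) * sg j"
proof -
  have "(X * minkowski_G k) $$ (i,j) = (\<Sum>l<k. X $$ (i,l) * minkowski_G k $$ (l,j))"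
    using assms by (simp add: scalar_prod_def lessThan_atLeast0)
  also have "\<dots> = (\<Sum>l<k. if l = j then X $$ (i,j) * sg j else 0)"
    using assms by (intro sum.cong) (auto simp: G_index)
  also have "\<dots> = X $$ (i,j) * sg j" using assms by (simp add: sum.delta)
  finally show ?thesis .
qed

lemma madj_dims[simp]: "dim_row (mink_adj A) = dim_col A" "dim_col (mink_adj A) = dim_row A"
  by (auto simp: mink_adj_def)

lemma madj_index: "i < dim_col A \<Longrightarrow> j < dim_row A \<Longrightarrow>
   mink_adj A $$ (i,j) = sg i * sg j * cnj (A $$ (j,i))"
  unfolding mink_adj_def
  by (subst G_mult_right) (auto simp del: index_mult_mat(1) simp: G_mult_left)

lemma madj_carrier[simp]: assumes "A \<in> carrier_mat m n" shows "mink_adj A \<in> carrier_mat n m"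
  using carrier_matD[OF assms] by (intro carrier_matI) simp_all

lemma sg_cancel: "sg i * sg j * (sg j * sg i * x) = x"
  by (simp add: sg_def)

lemma madj_madj[simp]: "mink_adj (mink_adj A) = A"
proof (rule eq_matI)
  fix i j assume ij: "i < dim_row A" "j < dim_col A"
  have "mink_adj (mink_adj A) $$ (i,j) = sg i * sg j * cnj (sg j * sg i * cnj (A $$ (i,j)))"
    using ij by (simp add: madj_index)
  also have "\<dots> = A $$ (i,j)" by (simp add: sg_cancel)
  finally show "mink_adj (mink_adj A) $$ (i,j) = A $$ (i,j)" .
qed auto

lemma madj_one[simp]: "mink_adj (1\<^sub>m k) = 1\<^sub>m k"
proof (rule eq_matI)
  fix i j assume ij: "i < dim_row (1\<^sub>m k)" "j < dim_col (1\<^sub>m k)"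
  have "mink_adj (1\<^sub>m k) $$ (i,j) = sg i * sg j * cnj (1\<^sub>m k $$ (j,i))"
    using ij by (simp add: madj_index)
  also have "\<dots> = 1\<^sub>m k $$ (i,j)" using ij by (cases "i = j") auto
  finally show "mink_adj (1\<^sub>m k) $$ (i,j) = 1\<^sub>m k $$ (i,j)" .
qed auto

lemma madj_mult: assumes "dim_col A = dim_row B"
  shows "mink_adj (A * B) = mink_adj B * mink_adj A"
proof (rule eq_matI)
  fix i j assume ij: "i < dim_row (mink_adj B * mink_adj A)" "j < dim_col (mink_adj B * mink_adj A)"
  have "mink_adj (A * B) $$ (i,j) = sg i * sg j * cnj (\<Sum>l<dim_row B. A $$ (j,l) * B $$ (l,i))"
    using ij assms by (simp add: madj_index scalar_prod_def lessThan_atLeast0)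
  also have "\<dots> = (\<Sum>l<dim_row B. (sg i * sg l * cnj (B $$ (l,i))) * (sg l * sg j * cnj (A $$ (j,l))))"
    by (simp add: sum_distrib_left cnj_sum) (intro sum.cong refl; simp add: algebra_simps sg_def)
  also have "\<dots> = (mink_adj B * mink_adj A) $$ (i,j)"
    using ij assms by (simp add: madj_index scalar_prod_def lessThan_atLeast0)
  finally show "mink_adj (A * B) $$ (i,j) = (mink_adj B * mink_adj A) $$ (i,j)" .
qed (use assms in auto)


lemma (in vec_space) nd_low_rank:
assumes "A \<in> carrier_mat n nc"
and "\<not> distinct (cols A)"
shows "rank A < nc"
proof -
  obtain S where "maximal S (\<lambda>T. T \<subseteq> set (cols A) \<and> lin_indpt T)"
    using maximal_exists[of "(\<lambda>T. T \<subseteq> set (cols A) \<and> lin_indpt T)" "card (set (cols A))" "{}"]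
    by (meson List.finite_set card_mono empty_iff empty_subsetI finite_lin_indpt2 rev_finite_subset)
  then have "card S \<le> card (set (cols A))" by (simp add: card_mono maximal_def)
  then have "card S < nc"
    using assms(1) cols_length card_length \<open>\<not> distinct (cols A)\<close> card_distinct carrier_matD(2) nat_less_le
    by (metis dual_order.antisym dual_order.trans)
  then show ?thesis
    using rank_card_indpt[OF \<open>A \<in> carrier_mat n nc\<close> \<open>maximal S (\<lambda>T. T \<subseteq> set (cols A) \<and> lin_indpt T)\<close>]
    by simp
qed

lemma (in vec_space) full_rank_inj:
  assumes A: "A \<in> carrier_mat n nc" and r: "rank A = nc" and v: "v \<in> carrier_vec nc"
    and Av: "A *\<^sub>v v = 0\<^sub>v n"
  shows "v = 0\<^sub>v nc"
proof (rule ccontr)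
  assume nz: "v \<noteq> 0\<^sub>v nc"
  have d: "distinct (cols A)" using nd_low_rank[OF A] r by force
  have "lin_indpt (set (cols A))" using full_rank_lin_indpt[OF A r d] .
  moreover have "lin_dep (set (cols A))" using lin_depI[OF A v nz Av d] .
  ultimately show False by simp
qed

lemma (in vec_space) rank_mid_det:
  assumes P: "P \<in> carrier_mat n k" and M: "M \<in> carrier_mat k k" and Q: "Q \<in> carrier_mat k q"
    and r: "rank (P * M * Q) = k"
  shows "det M \<noteq> 0"
proof
  assume dM: "det M = 0"
  let ?A = "P * M * Q"
  have A: "?A \<in> carrier_mat n q" using P M Q by auto
  obtain S where S: "maximal S (\<lambda>T. T \<subseteq> set (cols ?A) \<and> lin_indpt T)"
    using maximal_exists[of "(\<lambda>T. T \<subseteq> set (cols ?A) \<and> lin_indpt T)" "card (set (cols ?A))" "{}"]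
    by (meson List.finite_set card_mono empty_iff empty_subsetI finite_lin_indpt2 rev_finite_subset)
  have cS: "card S = k" using rank_card_indpt[OF A S] r by simp
  have SA: "S \<subseteq> set (cols ?A)" and li: "lin_indpt S" using S by (auto simp: maximal_def)
  have fS: "finite S" using SA finite_subset by blast
  obtain ss where ss: "set ss = S" "distinct ss" using finite_distinct_list[OF fS] by blast
  have lss: "length ss = k" using cS ss distinct_card by metis
  have Scar: "S \<subseteq> carrier_vec n" using SA A cols_dim by blast
  define jf where "jf s = (SOME j. j < q \<and> s = col ?A j)" for s
  have jf: "jf s < q \<and> s = col ?A (jf s)" if "s \<in> S" for s
  proof -
    from that SA obtain j where "j < length (cols ?A)" "s = cols ?A ! j"
      by (metis in_set_conv_nth subsetD)
    then have "\<exists>j. j < q \<and> s = col ?A j" using A Q by auto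
    then show ?thesis unfolding jf_def by (rule someI_ex)
  qed
  define Y where "Y = mat_of_cols k (map (\<lambda>s. col Q (jf s)) ss)"
  have Y: "Y \<in> carrier_mat k k" unfolding Y_def using lss by auto
  have eq: "P * (M * Y) = mat_of_cols n ss"
  proof (rule mat_col_eqI)
    fix i assume "i < dim_col (mat_of_cols n ss)"
    then have i: "i < k" using lss by simp
    have si: "ss ! i \<in> S" using ss i lss by auto
    have "col (P * (M * Y)) i = P *\<^sub>v col (M * Y) i"
      by (rule col_mult2[OF P mult_carrier_mat[OF M Y] i])
    also have "col (M * Y) i = M *\<^sub>v col Y i" by (rule col_mult2[OF M Y i])
    also have "col Y i = col Q (jf (ss ! i))" unfolding Y_def using i lss Q jf[OF si]
      by (subst col_mat_of_cols) (auto simp: carrier_vecI)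
    also have "P *\<^sub>v (M *\<^sub>v col Q (jf (ss ! i))) = col ?A (jf (ss ! i))"
    proof -
      have j: "jf (ss ! i) < q" using jf[OF si] by simp
      have "col ?A (jf (ss ! i)) = (P * M) *\<^sub>v col Q (jf (ss ! i))"
        using col_mult2[OF _ Q j, of "P * M" n] P M by simp
      then show ?thesis using P M Q j by (simp add: assoc_mult_mat_vec)
    qed
    also have "\<dots> = ss ! i" using jf[OF si] by simp
    also have "\<dots> = col (mat_of_cols n ss) i" using i lss si Scar by (subst col_mat_of_cols) auto
    finally show "col (P * (M * Y)) i = col (mat_of_cols n ss) i" .
  qed (use P M Y lss in auto)
  have MY: "M * Y \<in> carrier_mat k k" using mult_carrier_mat[OF M Y] .
  have "det (M * Y) = 0" using det_mult[OF M Y] dM by simp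
  then obtain v where v: "v \<in> carrier_vec k" "v \<noteq> 0\<^sub>v k" "(M * Y) *\<^sub>v v = 0\<^sub>v k"
    using det_0_iff_vec_prod_zero_field[OF MY] by blast
  have Sc: "mat_of_cols n ss \<in> carrier_mat n k" using mat_of_cols_carrier(1)[of n ss] unfolding lss .
  have "mat_of_cols n ss *\<^sub>v v = P *\<^sub>v ((M * Y) *\<^sub>v v)"
    unfolding eq[symmetric] using assoc_mult_mat_vec[OF P MY v(1)] .
  also have "\<dots> = 0\<^sub>v n" unfolding v(3) using P by (intro eq_vecI) auto
  finally have zero: "mat_of_cols n ss *\<^sub>v v = 0\<^sub>v n" .
  have cc: "set ss \<subseteq> carrier_vec n" using ss Scar by simp
  have colsY: "cols (mat_of_cols n ss) = ss" using cols_mat_of_cols[OF cc] .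
  have "lin_dep (set (cols (mat_of_cols n ss)))"
    by (rule lin_depI[OF Sc v(1) v(2) zero]) (simp only: colsY ss(2))
  then have "lin_dep S" unfolding colsY ss(1) .
  with li show False by simp
qed

lemma carrier_self: "A \<in> carrier_mat (dim_row A) (dim_col A)"
  by (rule carrier_matI) (rule refl)+

lemma assoc_dim: assumes "dim_col A = dim_row B" "dim_col B = dim_row C"
  shows "A * B * C = A * (B * C)"
proof -
  have b: "B \<in> carrier_mat (dim_col A) (dim_col B)" using assms(1) by (intro carrier_matI) auto
  have c: "C \<in> carrier_mat (dim_col B) (dim_col C)" using assms(2) by (intro carrier_matI) auto
  show ?thesis by (rule assoc_mult_mat[OF carrier_self b c])
qed

lemma one_left_dim: "dim_row (A :: 'a :: semiring_1 mat) = k \<Longrightarrow> 1\<^sub>m k * A = A"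
  by (rule left_mult_one_mat[of A k "dim_col A"]) (intro carrier_matI; auto)

lemma one_right_dim: "dim_col (A :: 'a :: semiring_1 mat) = k \<Longrightarrow> A * 1\<^sub>m k = A"
  by (rule right_mult_one_mat[of A "dim_row A" k]) (intro carrier_matI; auto)

lemma B_cancel:
  assumes B: "B \<in> carrier_mat m r" and rB: "mrank B = r"
    and P: "P \<in> carrier_mat r k" and Q: "Q \<in> carrier_mat r k" and eq: "B * P = B * Q"
  shows "P = Q"
proof (rule mat_col_eqI)
  fix j assume j: "j < dim_col Q"
  then have jk: "j < k" using carrier_matD(2)[OF Q] by simp
  have r: "vec_space.rank m B = r" using rB carrier_matD(1)[OF B] unfolding mrank_def by simp
  have cP: "col P j \<in> carrier_vec r" by (rule col_carrier_vec[OF jk P])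
  have cQ: "col Q j \<in> carrier_vec r" by (rule col_carrier_vec[OF jk Q])
  have "B *\<^sub>v (col P j - col Q j) = B *\<^sub>v col P j - B *\<^sub>v col Q j"
    by (rule mult_minus_distrib_mat_vec[OF B cP cQ])
  also have "B *\<^sub>v col P j = col (B * P) j" using col_mult2[OF B P jk] by simp
  also have "B *\<^sub>v col Q j = col (B * Q) j" using col_mult2[OF B Q jk] by simp
  also have "col (B * P) j - col (B * Q) j = 0\<^sub>v m" unfolding eq
    by (rule minus_cancel_vec) (rule col_carrier_vec[OF jk mult_carrier_mat[OF B Q]])
  finally have "B *\<^sub>v (col P j - col Q j) = 0\<^sub>v m" .
  moreover have "col P j - col Q j \<in> carrier_vec r" using cP cQ by (rule minus_carrier_vec)
  ultimately have z: "col P j - col Q j = 0\<^sub>v r"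
    using vec_space.full_rank_inj[OF B r] by blast
  have dP: "dim_vec (col P j) = r" using carrier_vecD[OF cP] .
  have dQ: "dim_vec (col Q j) = r" using carrier_vecD[OF cQ] .
  show "col P j = col Q j"
  proof (rule eq_vecI)
    fix i assume "i < dim_vec (col Q j)"
    then have i: "i < r" unfolding dQ .
    have "col P j $ i - col Q j $ i = (col P j - col Q j) $ i"
      using index_minus_vec(1)[of i "col Q j" "col P j"] i dQ by argo
    also have "\<dots> = 0" unfolding z using index_zero_vec(1)[OF i] .
    finally show "col P j $ i = col Q j $ i" by simp
  next
    show "dim_vec (col P j) = dim_vec (col Q j)" unfolding dP dQ ..
  qed
next
  show "dim_row P = dim_row Q" using carrier_matD(1)[OF P] carrier_matD(1)[OF Q] by (rule trans[OF _ sym])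
next
  show "dim_col P = dim_col Q" using carrier_matD(2)[OF P] carrier_matD(2)[OF Q] by (rule trans[OF _ sym])
qed


theorem theorem4p7:
  fixes A B C :: "complex mat" and m n r :: nat
  assumes "A \<in> carrier_mat m n" and "B \<in> carrier_mat m r" and "C \<in> carrier_mat r n"
    and "mrank A = r" and "mrank (A * mink_adj A) = r" and "r > 0"
    and "A = B * C" and "mrank B = r" and "mrank C = r"
  shows "mink_inv_124 A =
    {mink_adj C * the (mat_inverse (C * mink_adj C)) * BL | BL.
       BL \<in> carrier_mat r m \<and> BL * B = 1\<^sub>m r}"
proof -
  have Ac: "A \<in> carrier_mat m n" by (rule assms(1))
  have Bc: "B \<in> carrier_mat m r" by (rule assms(2))
  have Cc: "C \<in> carrier_mat r n" by (rule assms(3))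
  have dA[simp]: "dim_row A = m" "dim_col A = n" using carrier_matD[OF Ac] by blast+
  have dB[simp]: "dim_row B = m" "dim_col B = r" using carrier_matD[OF Bc] by blast+
  have dC[simp]: "dim_row C = r" "dim_col C = n" using carrier_matD[OF Cc] by blast+
  have AB: "A = B * C" by (rule assms(7))
  define M where "M = C * mink_adj C"
  have Mc: "M \<in> carrier_mat r r" unfolding M_def by (rule mult_carrier_mat[OF Cc madj_carrier[OF Cc]])
  have dM[simp]: "dim_row M = r" "dim_col M = r" using carrier_matD[OF Mc] by blast+
  have aM: "mink_adj M = M" unfolding M_def by (simp add: madj_mult)
  have AA: "A * mink_adj A = B * M * mink_adj B"
    unfolding AB M_def by (simp add: madj_mult assoc_dim)
  have rk: "vec_space.rank m (B * M * mink_adj B) = r"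
    using assms(5) unfolding AA mrank_def by simp
  have "det M \<noteq> 0"
    by (rule vec_space.rank_mid_det[OF Bc Mc madj_carrier[OF Bc] rk])
  then have "mat_inverse M \<noteq> None"
    using mat_inverse(1)[OF Mc] det_non_zero_imp_unit[OF Mc] by metis
  then obtain Mi where Mi: "mat_inverse M = Some Mi" by blast
  have MMi: "M * Mi = 1\<^sub>m r" and MiM: "Mi * M = 1\<^sub>m r" and Mic: "Mi \<in> carrier_mat r r"
    using mat_inverse(2)[OF Mc Mi] by blast+
  have dMi[simp]: "dim_row Mi = r" "dim_col Mi = r" using carrier_matD[OF Mic] by blast+
  have aMi: "mink_adj Mi = Mi"
  proof -
    have L: "mink_adj Mi * M = 1\<^sub>m r"
    proof -
      have "mink_adj Mi * M = mink_adj Mi * mink_adj M" by (simp add: aM)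
      also have "\<dots> = mink_adj (M * Mi)" by (simp add: madj_mult)
      also have "\<dots> = 1\<^sub>m r" by (simp add: MMi)
      finally show ?thesis .
    qed
    have "mink_adj Mi = mink_adj Mi * (M * Mi)" by (simp add: MMi one_right_dim)
    also have "\<dots> = (mink_adj Mi * M) * Mi" by (simp add: assoc_dim)
    also have "\<dots> = Mi" by (simp add: L one_left_dim)
    finally show ?thesis .
  qed
  have theMi: "the (mat_inverse (C * mink_adj C)) = Mi" using Mi unfolding M_def by simp
  have MiC: "Mi * (C * (mink_adj C * Z)) = Z" if "dim_row Z = r" for Z
  proof -
    have "Mi * (C * (mink_adj C * Z)) = (Mi * M) * Z" unfolding M_def using that by (simp add: assoc_dim)
    then show ?thesis using that by (simp add: MiM one_left_dim)
  qed
  have CMi: "C * (mink_adj C * (Mi * Z)) = Z" if "dim_row Z = r" for Z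
  proof -
    have "C * (mink_adj C * (Mi * Z)) = (M * Mi) * Z" unfolding M_def using that by (simp add: assoc_dim)
    then show ?thesis using that by (simp add: MMi one_left_dim)
  qed
  show ?thesis unfolding theMi
  proof (rule subset_antisym[OF subsetI subsetI])
    fix X assume "X \<in> mink_inv_124 A"
    then have Xc0: "X \<in> carrier_mat (dim_col A) (dim_row A)" and 1: "A * X * A = A" and 2: "X * A * X = X"
      and 4: "mink_adj (X * A) = X * A" unfolding mink_inv_124_def by blast+
    have Xc: "X \<in> carrier_mat n m" using Xc0 by simp
    have dX[simp]: "dim_row X = n" "dim_col X = m" using carrier_matD[OF Xc] by blast+
    have "B * (C * (X * (B * C))) = B * C" using 1 unfolding AB by (simp add: assoc_dim)
    moreover have "C * (X * (B * C)) \<in> carrier_mat r n"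
      by (rule mult_carrier_mat[OF Cc mult_carrier_mat[OF Xc mult_carrier_mat[OF Bc Cc]]])
    ultimately have e1: "C * (X * (B * C)) = C"
      using B_cancel[OF Bc assms(8), of "C * (X * (B * C))" n C] Cc by blast
    have CXB: "C * (X * B) = 1\<^sub>m r"
    proof -
      have "C * (X * B) = C * (X * B) * 1\<^sub>m r" by (simp add: one_right_dim)
      also have "\<dots> = C * (X * B) * (C * (mink_adj C * (Mi * 1\<^sub>m r)))" using CMi[of "1\<^sub>m r"] by simp
      also have "\<dots> = C * (X * (B * C)) * (mink_adj C * (Mi * 1\<^sub>m r))" by (simp add: assoc_dim)
      also have "\<dots> = C * (mink_adj C * (Mi * 1\<^sub>m r))" unfolding e1 by (simp add: assoc_dim)
      also have "\<dots> = 1\<^sub>m r" using CMi[of "1\<^sub>m r"] by simp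
      finally show ?thesis .
    qed
    have XA: "X * A = mink_adj C * (mink_adj B * mink_adj X)"
      using 4 unfolding AB by (simp add: madj_mult assoc_dim)
    define Y where "Y = mink_adj B * mink_adj X * X"
    have dY[simp]: "dim_row Y = r" "dim_col Y = m" unfolding Y_def by simp_all
    have XY: "X = mink_adj C * Y"
    proof -
      have "X = X * A * X" using 2 by simp
      also have "\<dots> = mink_adj C * Y" unfolding XA Y_def by (simp add: assoc_dim)
      finally show ?thesis .
    qed
    show "X \<in> {mink_adj C * Mi * BL | BL. BL \<in> carrier_mat r m \<and> BL * B = 1\<^sub>m r}"
    proof (intro CollectI exI conjI)
      show "C * X \<in> carrier_mat r m" by (rule mult_carrier_mat[OF Cc Xc])
      show "C * X * B = 1\<^sub>m r" using CXB by (simp add: assoc_dim)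
      have CX: "C * X = C * (mink_adj C * Y)" by (subst XY) (rule refl)
      have "mink_adj C * Mi * (C * X) = mink_adj C * (Mi * (C * (mink_adj C * Y)))"
        unfolding CX by (simp add: assoc_dim)
      also have "\<dots> = X" using MiC[of Y] XY by simp
      finally show "X = mink_adj C * Mi * (C * X)" by simp
    qed
  next
    fix X assume "X \<in> {mink_adj C * Mi * BL | BL. BL \<in> carrier_mat r m \<and> BL * B = 1\<^sub>m r}"
    then obtain BL where BLc: "BL \<in> carrier_mat r m" and BLB: "BL * B = 1\<^sub>m r"
      and X: "X = mink_adj C * Mi * BL" by blast
    have dBL[simp]: "dim_row BL = r" "dim_col BL = m" using carrier_matD[OF BLc] by blast+
    have dX[simp]: "dim_row X = n" "dim_col X = m" unfolding X by simp_all
    have XA: "X * A = mink_adj C * (Mi * C)"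
    proof -
      have "X * A = mink_adj C * (Mi * ((BL * B) * C))" unfolding X AB by (simp add: assoc_dim)
      then show ?thesis unfolding BLB by (simp add: one_left_dim)
    qed
    have Xc: "X \<in> carrier_mat (dim_col A) (dim_row A)" by (rule carrier_matI) simp_all
    have "A * X * A = A * (X * A)" by (simp add: assoc_dim)
    also have "\<dots> = B * C * (mink_adj C * (Mi * C))" unfolding XA by (simp add: AB)
    also have "\<dots> = B * (C * (mink_adj C * (Mi * C)))" by (simp add: assoc_dim)
    also have "\<dots> = B * C" using CMi[of C] by simp
    finally have e1: "A * X * A = A" unfolding AB .
    have "X * A * X = mink_adj C * (Mi * (C * (mink_adj C * (Mi * BL))))"
      unfolding XA unfolding X by (simp add: assoc_dim)
    also have "\<dots> = X" unfolding X using CMi[of BL] by (simp add: assoc_dim)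
    finally have e2: "X * A * X = X" .
    have e4: "mink_adj (X * A) = X * A"
      unfolding XA by (simp add: madj_mult aMi assoc_dim)
    show "X \<in> mink_inv_124 A" unfolding mink_inv_124_def using Xc e1 e2 e4 by blast
  qed
qed

end
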